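(* Let $a<b$ be real numbers and let $C[a,b]$ be the space of real continuous functions on $[a,b]$ with the norm $\|x\|=\sup_{t\in[a,b]}|x(t)|$; let $\ell_1$ be the space of real sequences with $\|x\|_1=\sum_i|x_i|<\infty$, and $\ell_\infty$ the space of bounded real sequences with $\|x\|_\infty=\sup_n|x_n|$. Then $S_P(C[a,b])=S_P(\ell_1)=S_P(\ell_\infty)=\tfrac12$; consequently none of $C[a,b]$, $\ell_1$, $\ell_\infty$ is uniformly non-square.
   Context: For a real Banach space $X$ with unit sphere $S_X$, the P-angle constant is $S_P(X)=\sup\left\{\frac{\|x+y\|^2+\|x-y\|^2-4}{2\|x+y\|\,\|x-y\|}: x,y\in S_X,\ x\neq \pm y\right\}$. $X$ is uniformly non-square if there exists $\delta\in(0,1)$ such that for all $x,y\in S_X$, either $\frac{\|x-y\|}{2}\le 1-\delta$ or $\frac{\|x+y\|}{2}\le 1-\delta$. *)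

theory Defs
  imports "HOL-Analysis.Analysis" "HOL-Library.Function_Algebras"
begin

text \<open>A normed space is given concretely by a carrier V (a linear subspace of some
  real vector space of functions) and a norm function N on it.\<close>

definition P_angle_constant :: "'a::ab_group_add set \<Rightarrow> ('a \<Rightarrow> real) \<Rightarrow> real" where
  "P_angle_constant V N = Sup {((N (x + y))^2 + (N (x - y))^2 - 4) / (2 * N (x + y) * N (x - y)) | x y.
      x \<in> V \<and> y \<in> V \<and> N x = 1 \<and> N y = 1 \<and> x \<noteq> y \<and> x \<noteq> - y}"

definition uniformly_non_square :: "'a::ab_group_add set \<Rightarrow> ('a \<Rightarrow> real) \<Rightarrow> bool" where
  "uniformly_non_square V N \<longleftrightarrow> (\<exists>\<delta>. 0 < \<delta> \<and> \<delta> < 1 \<and>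
     (\<forall>x\<in>V. \<forall>y\<in>V. N x = 1 \<longrightarrow> N y = 1 \<longrightarrow>
        N (x - y) / 2 \<le> 1 - \<delta> \<or> N (x + y) / 2 \<le> 1 - \<delta>))"

text \<open>C[a,b]: continuous functions on [a,b], normalised to 0 outside [a,b]
  so that equality of elements is equality on [a,b].\<close>
definition Cab :: "real \<Rightarrow> real \<Rightarrow> (real \<Rightarrow> real) set" where
  "Cab a b = {f. continuous_on {a..b} f \<and> (\<forall>t. t \<notin> {a..b} \<longrightarrow> f t = 0)}"

definition sup_norm_ab :: "real \<Rightarrow> real \<Rightarrow> (real \<Rightarrow> real) \<Rightarrow> real" where
  "sup_norm_ab a b f = Sup ((\<lambda>t. \<bar>f t\<bar>) ` {a..b})"

definition ell1 :: "(nat \<Rightarrow> real) set" where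
  "ell1 = {x. summable (\<lambda>i. \<bar>x i\<bar>)}"

definition norm_ell1 :: "(nat \<Rightarrow> real) \<Rightarrow> real" where
  "norm_ell1 x = (\<Sum>i. \<bar>x i\<bar>)"

definition ellinf :: "(nat \<Rightarrow> real) set" where
  "ellinf = {x. bounded (range x)}"

definition norm_ellinf :: "(nat \<Rightarrow> real) \<Rightarrow> real" where
  "norm_ellinf x = Sup (range (\<lambda>n. \<bar>x n\<bar>))"

end

theory Submission
  imports Defs
begin

lemma key_ineq:
  fixes p q :: real
  assumes "0 \<le> p" "0 \<le> q" "p \<le> 2" "q \<le> 2"
  shows "(p^2 + q^2 - 4) / (2 * p * q) \<le> 1/2"
proof (cases "p * q = 0")
  case True then have z: "2*p*q = 0" by simp
  have "(p^2+q^2-4)/(2*p*q) = 0" by (simp only: z division_ring_divide_zero)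
  then show ?thesis by linarith
next
  case False
  then have pq: "p * q > 0" using assms by (simp add: less_le)
  have a: "(2-p)*(2-q) \<ge> 0" "p*(2-p) \<ge> 0" "q*(2-q) \<ge> 0" using assms by auto
  have "p^2 + q^2 - 4 \<le> p * q" using a by (simp add: algebra_simps power2_eq_square)
  then show ?thesis using pq by (simp add: divide_simps)
qed

lemma generic:
  fixes V :: "'a::ab_group_add set" and N :: "'a \<Rightarrow> real"
  assumes tri: "\<And>x y. x \<in> V \<Longrightarrow> y \<in> V \<Longrightarrow> N (x + y) \<le> N x + N y \<and> N (x - y) \<le> N x + N y
                  \<and> 0 \<le> N (x + y) \<and> 0 \<le> N (x - y)"
    and w: "x0 \<in> V" "y0 \<in> V" "N x0 = 1" "N y0 = 1" "x0 \<noteq> y0" "x0 \<noteq> - y0"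
      "N (x0 + y0) = 2" "N (x0 - y0) = 2"
  shows "P_angle_constant V N = 1/2 \<and> \<not> uniformly_non_square V N"
proof
  let ?S = "{((N (x + y))^2 + (N (x - y))^2 - 4) / (2 * N (x + y) * N (x - y)) | x y.
      x \<in> V \<and> y \<in> V \<and> N x = 1 \<and> N y = 1 \<and> x \<noteq> y \<and> x \<noteq> - y}"
  have mem: "1/2 \<in> ?S"
  proof -
    have "((N (x0 + y0))^2 + (N (x0 - y0))^2 - 4) / (2 * N (x0 + y0) * N (x0 - y0)) = 1/2"
      using w by simp
    then show ?thesis unfolding mem_Collect_eq
      by (intro exI[of _ x0] exI[of _ y0]) (use w in simp)
  qed
  have ub: "\<forall>z\<in>?S. z \<le> 1/2"
  proof
    fix z assume "z \<in> ?S"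
    then obtain x y where z: "z = ((N (x + y))^2 + (N (x - y))^2 - 4) / (2 * N (x + y) * N (x - y))"
      and h: "x \<in> V" "y \<in> V" "N x = 1" "N y = 1" by blast
    from tri[OF h(1,2)] h(3,4) show "z \<le> 1/2" unfolding z by (intro key_ineq) auto
  qed
  show "P_angle_constant V N = 1/2"
    unfolding P_angle_constant_def by (rule cSup_eq_maximum[OF mem]) (use ub in blast)
  show "\<not> uniformly_non_square V N"
    unfolding uniformly_non_square_def
  proof
    assume "\<exists>\<delta>>0. \<delta> < 1 \<and> (\<forall>x\<in>V. \<forall>y\<in>V. N x = 1 \<longrightarrow> N y = 1 \<longrightarrow>
        N (x - y) / 2 \<le> 1 - \<delta> \<or> N (x + y) / 2 \<le> 1 - \<delta>)"
    then obtain d where "d > 0" "\<forall>x\<in>V. \<forall>y\<in>V. N x = 1 \<longrightarrow> N y = 1 \<longrightarrow>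
        N (x - y) / 2 \<le> 1 - d \<or> N (x + y) / 2 \<le> 1 - d" by blast
    then show False using w by force
  qed
qed

lemma Cab_le:
  assumes "f \<in> Cab a b" "t \<in> {a..b}"
  shows "\<bar>f t\<bar> \<le> sup_norm_ab a b f"
proof -
  have "continuous_on {a..b} (\<lambda>t. \<bar>f t\<bar>)"
    using assms(1) unfolding Cab_def by (auto intro: continuous_intros)
  then have "compact ((\<lambda>t. \<bar>f t\<bar>) ` {a..b})" by (intro compact_continuous_image) auto
  then have "bdd_above ((\<lambda>t. \<bar>f t\<bar>) ` {a..b})"
    by (intro bounded_imp_bdd_above compact_imp_bounded)
  then show ?thesis unfolding sup_norm_ab_def using assms(2) by (intro cSup_upper) auto
qed

lemma Cab_tri:
  assumes "a \<le> b" "x \<in> Cab a b" "y \<in> Cab a b"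
  shows "sup_norm_ab a b (x + y) \<le> sup_norm_ab a b x + sup_norm_ab a b y
     \<and> sup_norm_ab a b (x - y) \<le> sup_norm_ab a b x + sup_norm_ab a b y
     \<and> 0 \<le> sup_norm_ab a b (x + y) \<and> 0 \<le> sup_norm_ab a b (x - y)"
proof -
  have ne: "{a..b} \<noteq> {}" using assms by auto
  have p: "x + y \<in> Cab a b" "x - y \<in> Cab a b" using assms(2,3)
    unfolding Cab_def by (auto intro: continuous_intros)
  have 1: "sup_norm_ab a b (x + y) \<le> sup_norm_ab a b x + sup_norm_ab a b y"
    unfolding sup_norm_ab_def[of a b "x+y"]
  proof (rule cSup_least)
    show "(\<lambda>t. \<bar>(x + y) t\<bar>) ` {a..b} \<noteq> {}" using ne by simp
    fix z assume "z \<in> (\<lambda>t. \<bar>(x + y) t\<bar>) ` {a..b}"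
    then obtain t where "t \<in> {a..b}" "z = \<bar>x t + y t\<bar>" by auto
    then show "z \<le> sup_norm_ab a b x + sup_norm_ab a b y"
      using Cab_le[OF assms(2)] Cab_le[OF assms(3)] by (smt (verit))
  qed
  have 2: "sup_norm_ab a b (x - y) \<le> sup_norm_ab a b x + sup_norm_ab a b y"
    unfolding sup_norm_ab_def[of a b "x-y"]
  proof (rule cSup_least)
    show "(\<lambda>t. \<bar>(x - y) t\<bar>) ` {a..b} \<noteq> {}" using ne by simp
    fix z assume "z \<in> (\<lambda>t. \<bar>(x - y) t\<bar>) ` {a..b}"
    then obtain t where "t \<in> {a..b}" "z = \<bar>x t - y t\<bar>" by auto
    then show "z \<le> sup_norm_ab a b x + sup_norm_ab a b y"
      using Cab_le[OF assms(2)] Cab_le[OF assms(3)] by (smt (verit))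
  qed
  have "a \<in> {a..b}" using assms by auto
  then have "0 \<le> sup_norm_ab a b (x + y)" "0 \<le> sup_norm_ab a b (x - y)"
    using Cab_le[OF p(1)] Cab_le[OF p(2)] by (smt (verit))+
  then show ?thesis using 1 2 by simp
qed

lemma sup_max:
  fixes f :: "real \<Rightarrow> real"
  assumes "s \<in> {a..b}" "f s = m" "\<And>t. t \<in> {a..b} \<Longrightarrow> f t \<le> m"
  shows "Sup (f ` {a..b}) = m"
  using assms by (intro cSup_eq_maximum) force+

lemma Cab_part:
  assumes "a < b"
  shows "P_angle_constant (Cab a b) (sup_norm_ab a b) = 1/2
       \<and> \<not> uniformly_non_square (Cab a b) (sup_norm_ab a b)"
proof -
  define x0 :: "real \<Rightarrow> real" where "x0 = (\<lambda>t. if t \<in> {a..b} then 1 else 0)"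
  define y0 :: "real \<Rightarrow> real" where "y0 = (\<lambda>t. if t \<in> {a..b} then 2*(t-a)/(b-a) - 1 else 0)"
  have ab: "a \<in> {a..b}" "b \<in> {a..b}" using assms by auto
  have cx: "continuous_on {a..b} x0"
    by (rule continuous_on_eq[of _ "\<lambda>t. 1"]) (auto simp: x0_def)
  have cy: "continuous_on {a..b} y0"
    by (rule continuous_on_eq[of _ "\<lambda>t. 2*(t-a)/(b-a) - 1"]) (use assms in \<open>auto simp: y0_def intro!: continuous_intros\<close>)
  have inV: "x0 \<in> Cab a b" "y0 \<in> Cab a b" using cx cy by (auto simp: Cab_def x0_def y0_def)
  have range: "\<And>t. t \<in> {a..b} \<Longrightarrow> 0 \<le> (t-a)/(b-a) \<and> (t-a)/(b-a) \<le> 1"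
    using assms by (auto simp: divide_simps)
  have n1: "sup_norm_ab a b x0 = 1" unfolding sup_norm_ab_def
    by (rule sup_max[OF ab(1)]) (use assms in \<open>auto simp: x0_def\<close>)
  have n2: "sup_norm_ab a b y0 = 1" unfolding sup_norm_ab_def
  proof (rule sup_max[OF ab(1)])
    show "\<bar>y0 a\<bar> = 1" using ab by (simp add: y0_def)
    fix t assume t: "t \<in> {a..b}"
    have "2*(t-a)/(b-a) = 2*((t-a)/(b-a))" by simp
    then show "\<bar>y0 t\<bar> \<le> 1" using range[OF t] t unfolding y0_def by (simp only: if_True) linarith
  qed
  have n3: "sup_norm_ab a b (x0 + y0) = 2" unfolding sup_norm_ab_def
  proof (rule sup_max[OF ab(2)])
    show "\<bar>(x0 + y0) b\<bar> = 2" using ab assms by (simp add: x0_def y0_def divide_simps)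
    fix t assume t: "t \<in> {a..b}"
    have "2*(t-a)/(b-a) = 2*((t-a)/(b-a))" by simp
    then show "\<bar>(x0 + y0) t\<bar> \<le> 2" using range[OF t] t unfolding x0_def y0_def
      by (simp only: plus_fun_apply if_True) linarith
  qed
  have n4: "sup_norm_ab a b (x0 - y0) = 2" unfolding sup_norm_ab_def
  proof (rule sup_max[OF ab(1)])
    show "\<bar>(x0 - y0) a\<bar> = 2" using ab assms by (simp add: x0_def y0_def)
    fix t assume t: "t \<in> {a..b}"
    have "2*(t-a)/(b-a) = 2*((t-a)/(b-a))" by simp
    then show "\<bar>(x0 - y0) t\<bar> \<le> 2" using range[OF t] t unfolding x0_def y0_def
      by (simp only: fun_diff_def if_True) linarith
  qed
  have d1: "x0 \<noteq> y0"
  proof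
    assume "x0 = y0" then have "x0 a = y0 a" by simp
    then show False using ab assms by (simp add: x0_def y0_def)
  qed
  have d2: "x0 \<noteq> - y0"
  proof
    assume "x0 = - y0" then have "x0 b = - y0 b" by simp
    then show False using ab assms by (simp add: x0_def y0_def)
  qed
  show ?thesis
    by (rule generic[of "Cab a b" "sup_norm_ab a b" x0 y0], rule Cab_tri)
      (use assms inV n1 n2 n3 n4 d1 d2 in simp_all)
qed

lemma ell1_tri:
  assumes "x \<in> ell1" "y \<in> ell1"
  shows "norm_ell1 (x + y) \<le> norm_ell1 x + norm_ell1 y
     \<and> norm_ell1 (x - y) \<le> norm_ell1 x + norm_ell1 y
     \<and> 0 \<le> norm_ell1 (x + y) \<and> 0 \<le> norm_ell1 (x - y)"
proof -
  have sx: "summable (\<lambda>i. \<bar>x i\<bar>)" and sy: "summable (\<lambda>i. \<bar>y i\<bar>)" using assms by (auto simp: ell1_def)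
  have s: "summable (\<lambda>i. \<bar>x i\<bar> + \<bar>y i\<bar>)" using summable_add[OF sx sy] .
  have s1: "summable (\<lambda>i. \<bar>(x + y) i\<bar>)"
    by (rule summable_comparison_test[OF _ s]) auto
  have s2: "summable (\<lambda>i. \<bar>(x - y) i\<bar>)"
    by (rule summable_comparison_test[OF _ s]) auto
  have e: "(\<Sum>i. \<bar>x i\<bar> + \<bar>y i\<bar>) = norm_ell1 x + norm_ell1 y"
    unfolding norm_ell1_def using suminf_add[OF sx sy] by simp
  have 1: "norm_ell1 (x + y) \<le> norm_ell1 x + norm_ell1 y"
    unfolding e[symmetric] norm_ell1_def[of "x+y"] by (rule suminf_le[OF _ s1 s]) auto
  have 2: "norm_ell1 (x - y) \<le> norm_ell1 x + norm_ell1 y"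
    unfolding e[symmetric] norm_ell1_def[of "x-y"] by (rule suminf_le[OF _ s2 s]) auto
  have "0 \<le> norm_ell1 (x + y)" "0 \<le> norm_ell1 (x - y)"
    unfolding norm_ell1_def by (rule suminf_nonneg[OF s1], simp) (rule suminf_nonneg[OF s2], simp)
  then show ?thesis using 1 2 by simp
qed

lemma fin_sum:
  fixes f :: "nat \<Rightarrow> real"
  assumes "\<And>n. n \<notin> {0,1} \<Longrightarrow> f n = 0"
  shows "summable f" "suminf f = f 0 + f 1"
proof -
  show "summable f" by (rule summable_finite[of "{0,1}"]) (use assms in auto)
  have "suminf f = sum f {0,1}" by (rule suminf_finite) (use assms in auto)
  then show "suminf f = f 0 + f 1" by simp
qed

lemma ell1_part:
  "P_angle_constant ell1 norm_ell1 = 1/2 \<and> \<not> uniformly_non_square ell1 norm_ell1"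
proof -
  define x0 :: "nat \<Rightarrow> real" where "x0 = (\<lambda>i. if i = 0 then 1 else 0)"
  define y0 :: "nat \<Rightarrow> real" where "y0 = (\<lambda>i. if i = 1 then 1 else 0)"
  have s: "\<And>n. n \<notin> {0::nat,1} \<Longrightarrow> \<bar>x0 n\<bar> = 0" "\<And>n. n \<notin> {0::nat,1} \<Longrightarrow> \<bar>y0 n\<bar> = 0"
    "\<And>n. n \<notin> {0::nat,1} \<Longrightarrow> \<bar>(x0+y0) n\<bar> = 0" "\<And>n. n \<notin> {0::nat,1} \<Longrightarrow> \<bar>(x0-y0) n\<bar> = 0"
    by (auto simp: x0_def y0_def)
  have inV: "x0 \<in> ell1" "y0 \<in> ell1" unfolding ell1_def using fin_sum(1)[OF s(1)] fin_sum(1)[OF s(2)] by auto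
  have n: "norm_ell1 x0 = 1" "norm_ell1 y0 = 1" "norm_ell1 (x0+y0) = 2" "norm_ell1 (x0-y0) = 2"
    unfolding norm_ell1_def
    using fin_sum(2)[OF s(1)] fin_sum(2)[OF s(2)] fin_sum(2)[OF s(3)] fin_sum(2)[OF s(4)]
    by (auto simp: x0_def y0_def)
  have d1: "x0 \<noteq> y0"
  proof
    assume "x0 = y0" then have "x0 0 = y0 0" by simp
    then show False by (simp add: x0_def y0_def)
  qed
  have d2: "x0 \<noteq> - y0"
  proof
    assume "x0 = - y0" then have "x0 0 = - y0 0" by simp
    then show False by (simp add: x0_def y0_def)
  qed
  show ?thesis by (rule generic[of ell1 norm_ell1 x0 y0], erule (1) ell1_tri) (use inV n d1 d2 in simp_all)
qed

lemma ellinf_le: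
  assumes "x \<in> ellinf"
  shows "\<bar>x n\<bar> \<le> norm_ellinf x"
proof -
  from assms obtain B where "\<forall>z\<in>range x. norm z \<le> B" unfolding ellinf_def bounded_iff by blast
  then have "bdd_above (range (\<lambda>n. \<bar>x n\<bar>))" by (auto intro!: bdd_aboveI[of _ B])
  then show ?thesis unfolding norm_ellinf_def by (intro cSup_upper) auto
qed

lemma ellinf_tri:
  assumes "x \<in> ellinf" "y \<in> ellinf"
  shows "norm_ellinf (x + y) \<le> norm_ellinf x + norm_ellinf y
     \<and> norm_ellinf (x - y) \<le> norm_ellinf x + norm_ellinf y
     \<and> 0 \<le> norm_ellinf (x + y) \<and> 0 \<le> norm_ellinf (x - y)"
proof -
  from assms obtain B C where B: "\<forall>z\<in>range x. norm z \<le> B" and C: "\<forall>z\<in>range y. norm z \<le> C"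
    unfolding ellinf_def bounded_iff by blast
  have p: "x + y \<in> ellinf" "x - y \<in> ellinf" unfolding ellinf_def bounded_iff
    using B C by (auto intro!: exI[of _ "B + C"] abs_triangle_ineq[THEN order_trans] abs_triangle_ineq4[THEN order_trans] add_mono)
  have 1: "norm_ellinf (x + y) \<le> norm_ellinf x + norm_ellinf y"
    unfolding norm_ellinf_def[of "x+y"]
    by (rule cSup_least) (auto intro: abs_triangle_ineq[THEN order_trans] add_mono ellinf_le[OF assms(1)] ellinf_le[OF assms(2)])
  have 2: "norm_ellinf (x - y) \<le> norm_ellinf x + norm_ellinf y"
    unfolding norm_ellinf_def[of "x-y"]
    by (rule cSup_least) (auto intro: abs_triangle_ineq4[THEN order_trans] add_mono ellinf_le[OF assms(1)] ellinf_le[OF assms(2)])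
  have "0 \<le> norm_ellinf (x + y)" "0 \<le> norm_ellinf (x - y)"
    using ellinf_le[OF p(1), of 0] ellinf_le[OF p(2), of 0] by linarith+
  then show ?thesis using 1 2 by simp
qed

lemma ellinf_part:
  "P_angle_constant ellinf norm_ellinf = 1/2 \<and> \<not> uniformly_non_square ellinf norm_ellinf"
proof -
  define x0 :: "nat \<Rightarrow> real" where "x0 = (\<lambda>i. 1)"
  define y0 :: "nat \<Rightarrow> real" where "y0 = (\<lambda>i. if i = 0 then 1 else -1)"
  have inV: "x0 \<in> ellinf" "y0 \<in> ellinf" unfolding ellinf_def bounded_iff
    by (auto simp: x0_def y0_def intro!: exI[of _ 1])
  have sm: "\<And>f :: nat \<Rightarrow> real. \<And>m k. f k = m \<Longrightarrow> (\<And>n. f n \<le> m) \<Longrightarrow> Sup (range f) = m"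
    by (intro cSup_eq_maximum) auto
  have n: "norm_ellinf x0 = 1" "norm_ellinf y0 = 1" "norm_ellinf (x0+y0) = 2" "norm_ellinf (x0-y0) = 2"
    unfolding norm_ellinf_def
      apply (rule sm[of _ 0]; simp add: x0_def y0_def)
     apply (rule sm[of _ 0]; simp add: x0_def y0_def)
    apply (rule sm[of _ 0]; simp add: x0_def y0_def)
   apply (rule sm[of _ 1]; simp add: x0_def y0_def)
  done
  have d1: "x0 \<noteq> y0"
  proof
    assume "x0 = y0" then have "x0 1 = y0 1" by simp
    then show False by (simp add: x0_def y0_def)
  qed
  have d2: "x0 \<noteq> - y0"
  proof
    assume "x0 = - y0" then have "x0 0 = - y0 0" by simp
    then show False by (simp add: x0_def y0_def)
  qed
  show ?thesis by (rule generic[of ellinf norm_ellinf x0 y0], erule (1) ellinf_tri) (use inV n d1 d2 in simp_all)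
qed

theorem mainTheorem13:
  fixes a b :: real
  assumes "a < b"
  shows "P_angle_constant (Cab a b) (sup_norm_ab a b) = 1/2
       \<and> P_angle_constant ell1 norm_ell1 = 1/2
       \<and> P_angle_constant ellinf norm_ellinf = 1/2
       \<and> \<not> uniformly_non_square (Cab a b) (sup_norm_ab a b)
       \<and> \<not> uniformly_non_square ell1 norm_ell1
       \<and> \<not> uniformly_non_square ellinf norm_ellinf"
  using Cab_part[OF assms] ell1_part ellinf_part by blast

end
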